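(* Consider the closed-loop system $\dot x(t)=f\big(x(t),k(x(t_{k(t)}))\big)$ described in the context, with the control updates generated by the ideal sampling logic based on condition $$\gamma_2(4\|e(t)\|)\le \lambda(1-c)V(x(t)),\qquad c\in(0,1),$$ and suppose that there is $\mu>0$ with $\gamma_2(4r)\le \mu\,\alpha_1(r)$ for all $r\ge 0$. Then, for every DoS interval $H_n=[h_n,h_n+\tau_n[$, the state satisfies $$\|x(t_{k(h_n)})\|\le \tfrac14\,\gamma_2^{-1}\big(\lambda(1-c)V(x(h_n))\big)+\tfrac14\,\gamma_2^{-1}\big(\mu V(x(h_n))\big)$$ over the domain of existence of the solution $x$.
   Context: Plant: $\dot x=f(x,u)$, $x\in\mathbb R^{n_x}$. There is a smooth feedback $u=k(x)$, a smooth function $V$, class $\mathcal K_\infty$ functions $\alpha_1,\alpha_2,\gamma_2$ and $\lambda>0$ such that for all $x,e$: $\alpha_1(\|x\|)\le V(x)\le\alpha_2(\|x\|)$ and $\nabla V(x)f(x,k(x+e))\le-\lambda V(x)+\gamma_2(\|e\|)$. Norms are Euclidean. DoS: a sequence $\{h_n\}_{n\in\mathbb N}$, $h_0\ge0$, and durations $\tau_n>0$ define DoS intervals $H_n=[h_n,h_n+\tau_n[$ during which no information is transmitted from sensor to actuator. $\Theta(t):=[0,t]\setminus\bigcup_n H_n$ and $\Xi(t):=\bigcup_n H_n\cap[0,t]$. Given control update (sampling) times $\{t_k\}_{k\in\mathbb N}$ with $t_0=0$, let $k(t):=-1$ if $\Theta(t)=\emptyset$ and otherwise $k(t):=\sup\{k\in\mathbb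 N: t_k\in\Theta(t)\}$ (index of the last successful update); with the convention $x(t_{-1}):=0$ (so $u=0$ if $h_0=0$ at start-up). The applied input is $u(t)=k(x(t_{k(t)}))$, and $e(t):=x(t_{k(t)})-x(t)$ is the measurement error, so that $\dot x=f(x,k(x+e))$. Ideal sampling logic: given $t_k$, (i) if $t_k$ does not belong to any DoS interval, $t_{k+1}$ is the infimal time larger than $t_k$ at which the condition $\gamma_2(4\|e(t)\|)\le\lambda(1-c)V(x(t))$ is violated; (ii) if $t_k\in H_n$, then $t_{k+1}:=h_n+\tau_n$. *)

theory Defs
  imports "HOL-Analysis.Analysis"
begin

definition class_K_inf :: "(real \<Rightarrow> real) \<Rightarrow> bool" where
  "class_K_inf \<alpha> \<longleftrightarrow> continuous_on {0..} \<alpha> \<and> \<alpha> 0 = 0 \<and> strict_mono_on {0..} \<alpha>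
      \<and> filterlim \<alpha> at_top at_top"

definition Kinv :: "(real \<Rightarrow> real) \<Rightarrow> real \<Rightarrow> real" where
  "Kinv \<gamma> = inv_into {0..} \<gamma>"

definition DoS_int :: "(nat \<Rightarrow> real) \<Rightarrow> (nat \<Rightarrow> real) \<Rightarrow> nat \<Rightarrow> real set" where
  "DoS_int h \<tau> n = {h n ..< h n + \<tau> n}"

definition DoS_set :: "(nat \<Rightarrow> real) \<Rightarrow> (nat \<Rightarrow> real) \<Rightarrow> real set" where
  "DoS_set h \<tau> = (\<Union>n. DoS_int h \<tau> n)"

definition Theta :: "(nat \<Rightarrow> real) \<Rightarrow> (nat \<Rightarrow> real) \<Rightarrow> real \<Rightarrow> real set" where
  "Theta h \<tau> t = {0..t} - DoS_set h \<tau>"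

text \<open>Index k(t) of the last successful update (-1 if Theta(t) is empty).
  Update times are extended reals (value \<infinity> = no further update).\<close>
definition last_idx :: "(nat \<Rightarrow> real) \<Rightarrow> (nat \<Rightarrow> real) \<Rightarrow> (nat \<Rightarrow> ereal) \<Rightarrow> real \<Rightarrow> int" where
  "last_idx h \<tau> ts t =
     (if Theta h \<tau> t = {} then -1
      else int (Sup {k. ts k \<in> ereal ` Theta h \<tau> t}))"

definition held_state :: "(nat \<Rightarrow> real) \<Rightarrow> (nat \<Rightarrow> real) \<Rightarrow> (nat \<Rightarrow> ereal) \<Rightarrow> (real \<Rightarrow> 'a::real_vector)
     \<Rightarrow> real \<Rightarrow> 'a" where
  "held_state h \<tau> ts x t =
     (if last_idx h \<tau> ts t = -1 then 0
      else x (real_of_ereal (ts (nat (last_idx h \<tau> ts t)))))"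

end

theory Submission imports Defs begin

lemma K_surj:
  assumes K: "class_K_inf \<gamma>" and y: "y \<ge> 0"
  shows "\<exists>z\<ge>0. \<gamma> z = y"
proof -
  from K have lim: "filterlim \<gamma> at_top at_top" and c: "continuous_on {0..} \<gamma>" and g0: "\<gamma> 0 = 0"
    by (auto simp: class_K_inf_def)
  from lim have "eventually (\<lambda>z. \<gamma> z \<ge> y) at_top" by (simp add: filterlim_at_top)
  then obtain N where N: "\<And>z. z \<ge> N \<Longrightarrow> \<gamma> z \<ge> y" by (auto simp: eventually_at_top_linorder)
  define b where "b = max N 0"
  have "\<gamma> b \<ge> y" using N b_def by simp
  moreover have "continuous_on {0..b} \<gamma>" using c by (rule continuous_on_subset) auto
  ultimately obtain z where "0 \<le> z" "z \<le> b" "\<gamma> z = y"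
    using IVT'[of \<gamma> 0 y b] g0 y b_def by auto
  thus ?thesis by auto
qed

lemma Kinv_prop:
  assumes K: "class_K_inf \<gamma>" and y: "y \<ge> 0"
  shows "Kinv \<gamma> y \<ge> 0 \<and> \<gamma> (Kinv \<gamma> y) = y"
proof -
  from K_surj[OF K y] have "y \<in> \<gamma> ` {0..}" by auto
  hence "inv_into {0..} \<gamma> y \<in> {0..}" "\<gamma> (inv_into {0..} \<gamma> y) = y"
    by (rule inv_into_into, rule f_inv_into_f)
  thus ?thesis unfolding Kinv_def by auto
qed

lemma Kinv_le:
  assumes K: "class_K_inf \<gamma>" and u: "u \<ge> 0" and y: "y \<ge> 0" and le: "\<gamma> u \<le> y"
  shows "u \<le> Kinv \<gamma> y"
proof (rule ccontr)
  assume "\<not> u \<le> Kinv \<gamma> y"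
  hence "Kinv \<gamma> y < u" by simp
  moreover have sm: "strict_mono_on {0..} \<gamma>" using K by (simp add: class_K_inf_def)
  ultimately have "\<gamma> (Kinv \<gamma> y) < \<gamma> u" using Kinv_prop[OF K y] u
    unfolding strict_mono_on_def by (metis atLeast_iff)
  thus False using Kinv_prop[OF K y] le by simp
qed

lemma K_nonneg:
  assumes K: "class_K_inf \<gamma>" and u: "u \<ge> 0"
  shows "\<gamma> u \<ge> 0"
proof -
  have sm: "strict_mono_on {0..} \<gamma>" "\<gamma> 0 = 0" using K by (auto simp: class_K_inf_def)
  show ?thesis
  proof (cases "u = 0")
    case False
    hence "\<gamma> 0 < \<gamma> u" using sm(1) u unfolding strict_mono_on_def by simp
    thus ?thesis using sm(2) by simp
  qed (use sm in simp)
qed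

lemma h_mono:
  assumes tau_pos: "\<And>n. (\<tau>::nat\<Rightarrow>real) n > 0" and h_sep: "\<And>n. h n + \<tau> n < h (Suc n)"
  shows "m < n \<Longrightarrow> h m + \<tau> m < h n"
proof (induction n)
  case 0 thus ?case by simp
next
  case (Suc n)
  show ?case
  proof (cases "m = n")
    case True thus ?thesis using h_sep by simp
  next
    case False
    hence "h m + \<tau> m < h n" using Suc by simp
    thus ?thesis using h_sep[of n] tau_pos[of n] by linarith
  qed
qed

lemma h_le:
  assumes tau_pos: "\<And>n. (\<tau>::nat\<Rightarrow>real) n > 0" and h_sep: "\<And>n. h n + \<tau> n < h (Suc n)"
  shows "m \<le> n \<Longrightarrow> h m \<le> h n"
  using h_mono[where h=h and \<tau>=\<tau>, OF tau_pos h_sep, of m n] tau_pos[of m]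
  by (cases "m = n") auto

lemma end_notin:
  assumes tau_pos: "\<And>n. (\<tau>::nat\<Rightarrow>real) n > 0" and h_sep: "\<And>n. h n + \<tau> n < h (Suc n)"
  shows "h m + \<tau> m \<notin> DoS_set h \<tau>"
proof
  assume "h m + \<tau> m \<in> DoS_set h \<tau>"
  then obtain j where j: "h j \<le> h m + \<tau> m" "h m + \<tau> m < h j + \<tau> j"
    by (auto simp: DoS_set_def DoS_int_def)
  consider "j < m" | "j = m" | "m < j" by linarith
  thus False
  proof cases
    case 1
    then have "h j + \<tau> j < h m" using h_mono[where h=h and \<tau>=\<tau>, OF tau_pos h_sep] by blast
    thus False using j tau_pos[of m] by linarith
  next
    case 2 thus False using j by simp
  next
    case 3
    then have "h m + \<tau> m < h j" using h_mono[where h=h and \<tau>=\<tau>, OF tau_pos h_sep] by blast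
    thus False using j by linarith
  qed
qed

lemma DoS_before:
  assumes tau_pos: "\<And>n. (\<tau>::nat\<Rightarrow>real) n > 0" and h_sep: "\<And>n. h n + \<tau> n < h (Suc n)"
    and "t \<in> DoS_int h \<tau> m" "t < h n"
  shows "m < n"
proof (rule ccontr)
  assume "\<not> m < n"
  hence "h n \<le> h m" using h_le[where h=h and \<tau>=\<tau>, OF tau_pos h_sep] by simp
  thus False using assms(3,4) by (auto simp: DoS_int_def)
qed

theorem lemma1:
  fixes f :: "'a::euclidean_space \<Rightarrow> 'u::real_normed_vector \<Rightarrow> 'a"
    and kfb :: "'a \<Rightarrow> 'u"
    and V :: "'a \<Rightarrow> real" and DV :: "'a \<Rightarrow> 'a \<Rightarrow> real"
    and \<alpha>1 \<alpha>2 \<gamma>2 :: "real \<Rightarrow> real"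
    and lam c \<mu> :: real
    and h \<tau> :: "nat \<Rightarrow> real"
    and ts :: "nat \<Rightarrow> ereal"
    and x :: "real \<Rightarrow> 'a"
    and T :: ereal
  assumes f_cont: "continuous_on UNIV (\<lambda>(z, u). f z u)"
    and k_cont: "continuous_on UNIV kfb"
    and V_deriv: "\<And>z. (V has_derivative DV z) (at z)"
    and K_inf: "class_K_inf \<alpha>1" "class_K_inf \<alpha>2" "class_K_inf \<gamma>2"
    and lam_pos: "lam > 0"
    and V_bounds: "\<And>z. \<alpha>1 (norm z) \<le> V z \<and> V z \<le> \<alpha>2 (norm z)"
    and ISS: "\<And>z e. DV z (f z (kfb (z + e))) \<le> - lam * V z + \<gamma>2 (norm e)"
    and c_range: "0 < c" "c < 1"
    and mu_pos: "\<mu> > 0"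
    and gamma_mu: "\<And>r. r \<ge> 0 \<Longrightarrow> \<gamma>2 (4 * r) \<le> \<mu> * \<alpha>1 r"
    (* DoS sequence *)
    and h0: "h 0 \<ge> 0"
    and tau_pos: "\<And>n. \<tau> n > 0"
    and h_sep: "\<And>n. h n + \<tau> n < h (Suc n)"
    (* solution on its maximal domain [0,T[ *)
    and T_pos: "T > 0"
    and x_cont: "continuous_on {t. 0 \<le> t \<and> ereal t < T} x"
    and x_ode: "\<And>t. 0 \<le> t \<Longrightarrow> ereal t < T \<Longrightarrow>
        (x has_vector_derivative f (x t) (kfb (held_state h \<tau> ts x t)))
          (at t within {s. t \<le> s \<and> ereal s < T})"
    (* ideal sampling logic *)
    and ts0: "ts 0 = 0"
    and ts_noDoS: "\<And>k. ts k \<notin> ereal ` DoS_set h \<tau> \<Longrightarrow>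
        ts (Suc k) = Inf {ereal t | t. ts k < ereal t \<and> 0 \<le> t \<and> ereal t < T \<and>
            \<not> (\<gamma>2 (4 * norm (x (real_of_ereal (ts k)) - x t)) \<le> lam * (1 - c) * V (x t))}"
    and ts_DoS: "\<And>k n. ts k \<in> ereal ` DoS_int h \<tau> n \<Longrightarrow> ts (Suc k) = ereal (h n + \<tau> n)"
    (* well-posedness: finitely many updates on bounded intervals (k(t) is a maximum) *)
    and nonZeno: "\<And>t. finite {k. ts k \<le> ereal t}"
  shows "\<forall>n. ereal (h n) < T \<longrightarrow>
           norm (held_state h \<tau> ts x (h n))
             \<le> 1/4 * Kinv \<gamma>2 (lam * (1 - c) * V (x (h n))) + 1/4 * Kinv \<gamma>2 (\<mu> * V (x (h n)))"
proof (intro allI impI)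
  fix n assume hT: "ereal (h n) < T"
  have hmono: "\<And>m n. m < n \<Longrightarrow> h m + \<tau> m < h n"
    using h_mono[where h=h and \<tau>=\<tau>, OF tau_pos h_sep] by blast
  have hle: "\<And>m n. m \<le> n \<Longrightarrow> h m \<le> h n"
    using h_le[where h=h and \<tau>=\<tau>, OF tau_pos h_sep] by blast
  have endn: "\<And>m. h m + \<tau> m \<notin> DoS_set h \<tau>"
    using end_notin[where h=h and \<tau>=\<tau>, OF tau_pos h_sep] by blast
  have before: "\<And>t m n. t \<in> DoS_int h \<tau> m \<Longrightarrow> t < h n \<Longrightarrow> m < n"
    using DoS_before[where h=h and \<tau>=\<tau>, OF tau_pos h_sep] by blast
  have hn0: "h n \<ge> 0" using hle[of 0 n] h0 by simp
  have hnD: "h n \<in> DoS_set h \<tau>" using tau_pos[of n] by (auto simp: DoS_set_def DoS_int_def)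
  have Vnn: "\<And>z. V z \<ge> 0"
    using V_bounds K_nonneg[OF K_inf(1)] by (meson norm_ge_zero order_trans)
  have Kinv_nn: "\<And>y. y \<ge> 0 \<Longrightarrow> Kinv \<gamma>2 y \<ge> 0" using Kinv_prop[OF K_inf(3)] by blast
  have A0: "lam * (1 - c) * V (x (h n)) \<ge> 0" using lam_pos c_range Vnn by simp
  have B0: "\<mu> * V (x (h n)) \<ge> 0" using mu_pos Vnn by simp
  define Th where "Th = Theta h \<tau> (h n)"
  define S where "S = {k. ts k \<in> ereal ` Th}"
  show "norm (held_state h \<tau> ts x (h n))
             \<le> 1/4 * Kinv \<gamma>2 (lam * (1 - c) * V (x (h n))) + 1/4 * Kinv \<gamma>2 (\<mu> * V (x (h n)))"
  proof (cases "Th = {}")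
    case True
    hence "held_state h \<tau> ts x (h n) = 0"
      by (simp add: held_state_def last_idx_def Th_def)
    thus ?thesis using Kinv_nn[OF A0] Kinv_nn[OF B0] by simp
  next
    case False
    have Sne: "S \<noteq> {}"
    proof (cases "0 \<in> DoS_set h \<tau>")
      case False
      hence "0 \<in> Th" using hn0 by (simp add: Th_def Theta_def)
      thus ?thesis using ts0 by (auto simp: S_def zero_ereal_def)
    next
      case True
      then obtain m where m: "0 \<in> DoS_int h \<tau> m" by (auto simp: DoS_set_def)
      have "m = 0"
      proof (rule ccontr)
        assume "m \<noteq> 0"
        hence "h 0 + \<tau> 0 < h m" using hmono by simp
        thus False using m h0 tau_pos[of 0] by (simp add: DoS_int_def)
      qed
      with m h0 have h00: "h 0 = 0" by (simp add: DoS_int_def)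
      have ts1: "ts 1 = ereal (\<tau> 0)"
        using ts_DoS[of 0 0] m \<open>m = 0\<close> ts0 h00 by (simp add: zero_ereal_def)
      have "n \<noteq> 0"
      proof
        assume "n = 0"
        hence "Th = {}" using h00 True by (auto simp: Th_def Theta_def)
        thus False using \<open>Th \<noteq> {}\<close> by simp
      qed
      hence "h 0 + \<tau> 0 < h n" using hmono by simp
      hence "\<tau> 0 \<in> Th" using endn[of 0] h00 tau_pos[of 0] by (auto simp: Th_def Theta_def)
      thus ?thesis using ts1 by (auto simp: S_def)
    qed
    have Sfin: "finite S"
    proof (rule finite_subset[OF _ nonZeno[of "h n"]])
      show "S \<subseteq> {k. ts k \<le> ereal (h n)}" by (auto simp: S_def Th_def Theta_def)
    qed
    define k where "k = Sup S"
    have kS: "k \<in> S" using Sfin Sne k_def by (simp add: cSup_eq_Max)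
    have kmax: "\<And>j. j \<in> S \<Longrightarrow> j \<le> k" using Sfin k_def by (simp add: le_cSup_finite)
    obtain tk where tk: "ts k = ereal tk" "tk \<in> Th" using kS by (auto simp: S_def)
    have tk0: "0 \<le> tk" "tk \<le> h n" "tk \<notin> DoS_set h \<tau>" using tk by (auto simp: Th_def Theta_def)
    have tkn: "tk < h n" using tk0 hnD by (cases "tk = h n") auto
    have held: "held_state h \<tau> ts x (h n) = x tk"
      using False tk by (simp add: held_state_def last_idx_def Th_def S_def k_def)
    define Vs where "Vs = {ereal t | t. ts k < ereal t \<and> 0 \<le> t \<and> ereal t < T \<and>
            \<not> (\<gamma>2 (4 * norm (x (real_of_ereal (ts k)) - x t)) \<le> lam * (1 - c) * V (x t))}"
    have tsS: "ts (Suc k) = Inf Vs"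
      using ts_noDoS[of k] tk tk0 by (auto simp: Vs_def)
    have claim1: "\<not> ts (Suc k) < ereal (h n)"
    proof
      assume lt: "ts (Suc k) < ereal (h n)"
      have ge: "ts k \<le> ts (Suc k)" unfolding tsS Vs_def
        by (rule Inf_greatest) auto
      obtain s where s: "ts (Suc k) = ereal s"
        using lt ge tk by (cases "ts (Suc k)") auto
      have s0: "0 \<le> s" "s < h n" using s lt ge tk tk0 by auto
      show False
      proof (cases "s \<in> DoS_set h \<tau>")
        case False
        hence "Suc k \<in> S" using s s0 by (auto simp: S_def Th_def Theta_def)
        thus False using kmax by fastforce
      next
        case True
        then obtain m where m: "s \<in> DoS_int h \<tau> m" by (auto simp: DoS_set_def)
        have "m < n" using before[OF m s0(2)] .
        hence e: "h m + \<tau> m < h n" using hmono by simp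
        have "ts (Suc (Suc k)) = ereal (h m + \<tau> m)" using ts_DoS[of "Suc k" m] s m by simp
        moreover have "h m + \<tau> m \<in> Th" using endn[of m] e m s0
          by (auto simp: Th_def Theta_def DoS_int_def)
        ultimately have "Suc (Suc k) \<in> S" by (auto simp: S_def)
        thus False using kmax by fastforce
      qed
    qed
    define D where "D = {t. 0 \<le> t \<and> ereal t < T}"
    define g where "g t = lam * (1 - c) * V (x t) - \<gamma>2 (4 * norm (x tk - x t))" for t
    have Vc: "continuous_on UNIV V"
      using V_deriv has_derivative_continuous continuous_at_imp_continuous_on by blast
    have g1: "continuous_on D (\<lambda>t. V (x t))"
      using continuous_on_compose2[OF Vc x_cont] by (simp add: D_def)
    have g2a: "continuous_on D (\<lambda>t. 4 * norm (x tk - x t))"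
      using x_cont unfolding D_def by (intro continuous_intros)
    have gc2: "continuous_on {0..} \<gamma>2" using K_inf(3) by (simp add: class_K_inf_def)
    have g2: "continuous_on D (\<lambda>t. \<gamma>2 (4 * norm (x tk - x t)))"
      by (rule continuous_on_compose2[OF gc2 g2a]) auto
    have gc: "continuous_on D g" unfolding g_def using g1 g2 by (intro continuous_intros)
    have claim2: "\<gamma>2 (4 * norm (x tk - x (h n))) \<le> lam * (1 - c) * V (x (h n))"
    proof (rule ccontr)
      assume "\<not> ?thesis"
      hence gneg: "g (h n) < 0" by (simp add: g_def)
      have hD: "h n \<in> D" using hn0 hT by (simp add: D_def)
      obtain d where d: "d > 0" "\<And>t. t \<in> D \<Longrightarrow> dist t (h n) < d \<Longrightarrow> dist (g t) (g (h n)) < - g (h n)"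
        using gc hD gneg unfolding continuous_on_iff by (metis neg_0_less_iff_less)
      define mn where "mn = min d (h n - tk)"
      have mm: "mn > 0" "mn \<le> d" "mn \<le> h n - tk"
        using d tkn by (auto simp: mn_def)
      define t where "t = h n - mn / 2"
      have t1a: "tk < t" using mm by (simp add: t_def)
      have t1b: "t < h n" using mm by (simp add: t_def)
      have t1c: "dist t (h n) < d" using mm by (simp add: t_def dist_real_def)
      note t1 = t1a t1b t1c
      have "ereal t < T" using t1b hT by (meson ereal_less(1) le_less_trans less_imp_le ereal_less_eq(3))
      hence tD: "t \<in> D" using t1 tk0 by (auto simp: D_def)
      have "g t < 0" using d(2)[OF tD t1(3)] gneg by (auto simp: dist_real_def)
      hence "ereal t \<in> Vs" using t1 tk tD by (auto simp: Vs_def g_def D_def)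
      hence "ts (Suc k) \<le> ereal t" unfolding tsS by (rule Inf_lower)
      moreover have "ereal t < ereal (h n)" using t1b by simp
      ultimately show False using claim1 by (meson le_less_trans)
    qed
    have a: "4 * norm (x tk - x (h n)) \<le> Kinv \<gamma>2 (lam * (1 - c) * V (x (h n)))"
      by (rule Kinv_le[OF K_inf(3) _ A0 claim2]) simp
    have "\<gamma>2 (4 * norm (x (h n))) \<le> \<mu> * \<alpha>1 (norm (x (h n)))" using gamma_mu by simp
    also have "\<dots> \<le> \<mu> * V (x (h n))" using V_bounds mu_pos by simp
    finally have b: "4 * norm (x (h n)) \<le> Kinv \<gamma>2 (\<mu> * V (x (h n)))"
      using Kinv_le[OF K_inf(3) _ B0] by simp
    have "norm (x tk) \<le> norm (x tk - x (h n)) + norm (x (h n))"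
      by (metis norm_triangle_sub add.commute)
    thus ?thesis using a b held by simp
  qed
qed
end
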